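(* Let $s(a,b)$ and $s(c,d)$ be proper $n$-sided one-step dice with $s(a,b)>s(c,d)$. Then there are integers $x,y,z$ such that the ordered pair $(s(a,b),s(c,d))$ has one of the following four forms: (1) $s(a,b)=s(x,y)$ and $s(c,d)=s(y,z)$; (2) $s(a,b)=s(x,y)$ and $s(c,d)=s(z,x+2)$; (3) $s(a,b)=s(x+1,y)$ and $s(c,d)=s(x,z)$; (4) $s(a,b)=s(x,y+1)$ and $s(c,d)=s(z,y)$.
   Context: Let $n\ge 3$. An $n$-sided die is a non-decreasing $n$-tuple of integers $(a_1,\dots,a_n)$. The standard die is $P_n=(1,2,\dots,n)$. For integers $a,b$ with $1\le a\le n-1$, $2\le b\le n$ and $b\notin\{a,a+1\}$, let $s(a,b)$ denote the die obtained from $P_n$ by replacing the face with value $a$ by $a+1$ and the face with value $b$ by $b-1$ (faces then arranged in non-decreasing order); these are the proper $n$-sided one-step dice. For two $n$-sided dice $A=(a_1,\dots,a_n)$, $B=(b_1,\dots,b_n)$ we write $A>B$ ("$A$ beats $B$") if $\#\{(i,j): a_i>b_j\} > \#\{(i,j): b_j>a_i\}$, where $(i,j)$ ranges over $\{1,\dots,n\}^2$; if the two counts are equal, $A$ and $B$ tie. *)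

theory Defs
  imports Main
begin

definition is_die :: "nat \<Rightarrow> int list \<Rightarrow> bool" where
  "is_die n A \<longleftrightarrow> length A = n \<and> sorted A"

definition std_die :: "nat \<Rightarrow> int list" where
  "std_die n = [1..int n]"

definition one_step :: "nat \<Rightarrow> int \<Rightarrow> int \<Rightarrow> int list" where
  "one_step n a b =
     sort (map (\<lambda>v. if v = a then a + 1 else if v = b then b - 1 else v) (std_die n))"

definition proper_params :: "nat \<Rightarrow> int \<Rightarrow> int \<Rightarrow> bool" where
  "proper_params n a b \<longleftrightarrow>
     1 \<le> a \<and> a \<le> int n - 1 \<and> 2 \<le> b \<and> b \<le> int n \<and> b \<noteq> a \<and> b \<noteq> a + 1"

definition wins :: "int list \<Rightarrow> int list \<Rightarrow> nat" where
  "wins A B = card {(i, j). i < length A \<and> j < length B \<and> A ! i > B ! j}"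

definition beats :: "int list \<Rightarrow> int list \<Rightarrow> bool" where
  "beats A B \<longleftrightarrow> wins A B > wins B A"

end

theory Submission imports Defs "HOL-Library.Multiset" begin
lemma wins_sum: "int (wins A B) = (\<Sum>x\<leftarrow>A. \<Sum>y\<leftarrow>B. if y < x then 1 else 0)"
proof -
  have e: "{(i, j). i < length A \<and> j < length B \<and> A ! i > B ! j} = {p\<in>{..<length A} \<times> {..<length B}. A ! fst p > B ! snd p}"
    by auto
  have "wins A B = (\<Sum>p\<in>{..<length A} \<times> {..<length B}. if B ! snd p < A ! fst p then 1 else 0)"
    unfolding wins_def e by (simp add: sum.inter_filter[symmetric])
  also have "\<dots> = (\<Sum>i<length A. \<Sum>j<length B. if B ! j < A ! i then 1 else 0)"
    by (simp add: sum.cartesian_product case_prod_beta)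
  finally have "int (wins A B) = (\<Sum>i<length A. \<Sum>j<length B. int (if B ! j < A ! i then 1 else 0))"
    by (simp add: of_nat_sum)
  also have "\<dots> = (\<Sum>i<length A. \<Sum>j<length B. if B ! j < A ! i then 1 else 0)"
    by (intro sum.cong refl) simp
  finally show ?thesis by (simp add: sum_list_sum_nth atLeast0LessThan)
qed

lemma sum_one_step: "(\<Sum>x\<leftarrow>one_step n a b. f x) = (\<Sum>i\<in>{1..int n}. f (if i = a then a + 1 else if i = b then b - 1 else i))"
proof -
  have "(\<Sum>x\<leftarrow>one_step n a b. f x) = sum_mset (image_mset f (mset (one_step n a b)))"
    by (simp only: mset_map[symmetric] sum_mset_sum_list)
  also have "\<dots> = (\<Sum>x\<leftarrow>map (\<lambda>v. if v = a then a + 1 else if v = b then b - 1 else v) [1..int n]. f x)"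
    unfolding one_step_def std_die_def by (simp only: mset_sort mset_map[symmetric] sum_mset_sum_list)
  finally show ?thesis by (simp add: sum_list_distinct_conv_sum_set o_def)
qed

lemma remove2: assumes "a \<noteq> b" "a \<in> {1..m}" "b \<in> {1..m}"
  shows "(\<Sum>i\<in>{1..m::int}. f (if i = a then a + 1 else if i = b then b - 1 else i))
     = (\<Sum>i\<in>{1..m}. f i) - f a - f b + f (a+1) + (f (b - 1)::int)" 
proof -
  let ?g = "\<lambda>i. f (if i = a then a + 1 else if i = b then b - 1 else i)"
  have "(\<Sum>i\<in>{1..m}. ?g i) = ?g a + ?g b + (\<Sum>i\<in>{1..m}-{a}-{b}. ?g i)"
    using assms by (simp add: sum.remove[of _ a] sum.remove[of _ b])
  moreover have "(\<Sum>i\<in>{1..m}. f i) = f a + f b + (\<Sum>i\<in>{1..m}-{a}-{b}. f i)"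
    using assms by (simp add: sum.remove[of _ a] sum.remove[of _ b])
  moreover have "(\<Sum>i\<in>{1..m}-{a}-{b}. ?g i) = (\<Sum>i\<in>{1..m}-{a}-{b}. f i)"
    by (rule sum.cong) auto
  ultimately show ?thesis using assms by simp
qed

lemma S_val: assumes "1 \<le> u" "u \<le> m" shows "(\<Sum>j\<in>{1..m::int}. sgn (u - j)) = 2*u - m - 1"
proof -
  have u1: "{1..m} = {1..<u} \<union> {u..m}" using assms by auto
  have u2: "{u..m} = insert u {u<..m}" using assms by auto
  have "(\<Sum>j\<in>{1..m}. sgn (u - j)) = (\<Sum>j\<in>{1..<u}. sgn (u - j)) + (\<Sum>j\<in>{u..m}. sgn (u - j))"
    unfolding u1 by (rule sum.union_disjoint) auto
  also have "(\<Sum>j\<in>{u..m}. sgn (u - j)) = sgn (u-u) + (\<Sum>j\<in>{u<..m}. sgn (u - j))"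
    unfolding u2 by simp
  also have "(\<Sum>j\<in>{1..<u}. sgn (u - j)) = (\<Sum>j\<in>{1..<u}. 1)"
    by (rule sum.cong) auto
  also have "(\<Sum>j\<in>{u<..m}. sgn (u - j)) = (\<Sum>j\<in>{u<..m}. -1)"
    by (rule sum.cong) auto
  finally show ?thesis using assms by simp
qed

lemma S_sum: "(\<Sum>i\<in>{1..m::int}. \<Sum>j\<in>{1..m}. sgn (i - j)) = 0"
proof -
  have "(\<Sum>i\<in>{1..m::int}. \<Sum>j\<in>{1..m}. sgn (i - j)) = (\<Sum>j\<in>{1..m::int}. \<Sum>i\<in>{1..m}. sgn (i - j))"
    by (rule sum.swap)
  also have "\<dots> = (\<Sum>j\<in>{1..m::int}. \<Sum>i\<in>{1..m}. - sgn (j - i))"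
    by (simp add: sgn_minus[symmetric])
  also have "\<dots> = - (\<Sum>i\<in>{1..m::int}. \<Sum>j\<in>{1..m}. sgn (i - j))"
    by (simp add: sum_negf)
  finally show ?thesis by simp
qed
lemma h_val: "2 * sgn k - sgn (k - 1) - sgn (k + 1) = (if k = 1 then 1 else if k = -1 then -1 else (0::int))"
  by (cases "k \<ge> 2"; cases "k \<le> -2"; auto simp: sgn_if)

theorem mainTheorem2:
  fixes n :: nat and a b c d :: int
  assumes "n \<ge> 3"
    and "proper_params n a b" and "proper_params n c d"
    and "beats (one_step n a b) (one_step n c d)"
  shows "\<exists>x y z :: int.
     (proper_params n x y \<and> proper_params n y z \<and>
        one_step n a b = one_step n x y \<and> one_step n c d = one_step n y z)
   \<or> (proper_params n x y \<and> proper_params n z (x + 2) \<and>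
        one_step n a b = one_step n x y \<and> one_step n c d = one_step n z (x + 2))
   \<or> (proper_params n (x + 1) y \<and> proper_params n x z \<and>
        one_step n a b = one_step n (x + 1) y \<and> one_step n c d = one_step n x z)
   \<or> (proper_params n x (y + 1) \<and> proper_params n z y \<and>
        one_step n a b = one_step n x (y + 1) \<and> one_step n c d = one_step n z y)"
proof -
  define m where "m = int n"
  define I where "I = {1..m}"
  define \<phi> where "\<phi> = (\<lambda>i. if i = a then a + 1 else if i = b then b - 1 else i)"
  define \<psi> where "\<psi> = (\<lambda>i. if i = c then c + 1 else if i = d then d - 1 else i)"
  define S where "S = (\<lambda>u. \<Sum>j\<in>I. sgn (u - j))"
  define G where "G = (\<lambda>u. \<Sum>j\<in>I. sgn (u - \<psi> j))"
  define D where "D = (\<Sum>i\<in>I. G (\<phi> i))"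
  define h where "h = (\<lambda>k::int. 2 * sgn k - sgn (k - 1) - sgn (k + 1))"
  have pa: "1 \<le> a" "a \<le> m - 1" "2 \<le> b" "b \<le> m" "b \<noteq> a" "b \<noteq> a + 1"
    using assms(2) by (auto simp: proper_params_def m_def)
  have pc: "1 \<le> c" "c \<le> m - 1" "2 \<le> d" "d \<le> m" "d \<noteq> c" "d \<noteq> c + 1"
    using assms(3) by (auto simp: proper_params_def m_def)
  have Sv: "\<And>u. 1 \<le> u \<Longrightarrow> u \<le> m \<Longrightarrow> S u = 2*u - m - 1"
    unfolding S_def I_def by (rule S_val)
  have wAB: "int (wins (one_step n a b) (one_step n c d)) = (\<Sum>i\<in>I. \<Sum>j\<in>I. if \<psi> j < \<phi> i then 1 else 0)"
    unfolding wins_sum sum_one_step I_def m_def \<phi>_def \<psi>_def ..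
  have wBA: "int (wins (one_step n c d) (one_step n a b)) = (\<Sum>i\<in>I. \<Sum>j\<in>I. if \<phi> i < \<psi> j then 1 else 0)"
    unfolding wins_sum sum_one_step I_def m_def \<phi>_def \<psi>_def by (rule sum.swap)
  have "D = (\<Sum>i\<in>I. \<Sum>j\<in>I. (if \<psi> j < \<phi> i then 1 else 0) - (if \<phi> i < \<psi> j then 1 else 0))"
    unfolding D_def G_def by (intro sum.cong refl) (auto simp: sgn_if)
  also have "\<dots> = int (wins (one_step n a b) (one_step n c d)) - int (wins (one_step n c d) (one_step n a b))"
    unfolding wAB wBA by (simp add: sum_subtractf)
  finally have Dpos: "D > 0" using assms(4) unfolding beats_def by simp
  have Gv: "G u = S u - sgn (u - c) - sgn (u - d) + sgn (u - (c + 1)) + sgn (u - (d - 1))" for u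
    unfolding G_def S_def \<psi>_def I_def using pc by (subst remove2) auto
  have D1: "D = (\<Sum>i\<in>I. G i) - G a - G b + G (a+1) + G (b - 1)"
    unfolding D_def \<phi>_def I_def using pa by (subst remove2) auto
  have sgnsum: "(\<Sum>i\<in>I. sgn (i - v)) = - S v" for v
    unfolding S_def by (simp add: sum_negf[symmetric] sgn_minus[symmetric])
  have "(\<Sum>i\<in>I. G i) = (\<Sum>i\<in>I. S i) - (\<Sum>i\<in>I. sgn (i - c)) - (\<Sum>i\<in>I. sgn (i - d))
      + (\<Sum>i\<in>I. sgn (i - (c + 1))) + (\<Sum>i\<in>I. sgn (i - (d - 1)))"
    unfolding Gv by (simp add: sum.distrib sum_subtractf)
  also have "(\<Sum>i\<in>I. S i) = 0" unfolding S_def I_def by (rule S_sum)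
  finally have "(\<Sum>i\<in>I. G i) = S c + S d - S (c+1) - S (d - 1)" unfolding sgnsum by simp
  hence G0: "(\<Sum>i\<in>I. G i) = 0" using pc Sv by simp
  have "D = h (a - c) - h (a - d + 1) - h (b - 1 - c) + h (b - d)"
    unfolding D1 G0 Gv h_def using pa Sv[of a] Sv[of "a+1"] Sv[of b] Sv[of "b - 1"]
    by (simp add: algebra_simps)
  hence "c = b \<or> d = a + 2 \<or> a = c + 1 \<or> b = d + 1"
    using Dpos unfolding h_def h_val by (auto split: if_splits)
  thus ?thesis
  proof (elim disjE)
    assume "c = b" thus ?thesis using assms(2,3) by blast
  next
    assume "d = a + 2" thus ?thesis using assms(2,3) by blast
  next
    assume "a = c + 1" thus ?thesis using assms(2,3) by blast
  next
    assume "b = d + 1" thus ?thesis using assms(2,3) by blast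
  qed
qed
end
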